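(* Every Gaussian distribution on $\mathbb{R}^n$ satisfies $\mathrm{IC}(1)$.
   Context: For functions $f,g:\mathbb{R}^n\to(-\infty,\infty]$ the infimum convolution is $\inf_{y\in\mathbb{R}^n}\{f(x-y)+g(y)\}$. A pair $(\mu,W)$, with $\mu$ a probability measure on $\mathbb{R}^n$ and $W:\mathbb{R}^n\to[0,\infty]$, satisfies property $(\tau)$ if for every bounded function $f$, $\int e^{h}\,d\mu\int e^{-f}\,d\mu\le 1$, where $h(x)=\inf_{y}\{W(x-y)+f(y)\}$. For a measure $\mu$, $\mu'$ is its reflection through the origin, $\overline{\mu}=\mu*\mu'$, $\Lambda_\mu=\ln M_\mu$ with $M_\mu(x)=\int e^{\langle x,y\rangle}d\mu(y)$, and $\Lambda^*_\mu(x)=\sup_y\{\langle x,y\rangle-\Lambda_\mu(y)\}$ is the Cramer transform. A probability measure $\mu$ satisfies $\mathrm{IC}(\beta)$ ($\beta>0$) if the pair $(\mu,\Lambda^*_{\overline{\mu}}(\cdot/\beta))$ satisfies property $(\tau)$. *)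

theory Defs
  imports "HOL-Probability.Probability"
begin

definition eexp :: "ereal \<Rightarrow> ennreal" where
  "eexp t = (if t = \<infinity> then \<infinity> else if t = - \<infinity> then 0 else ennreal (exp (real_of_ereal t)))"

definition outer_nn_integral :: "'a measure \<Rightarrow> ('a \<Rightarrow> ennreal) \<Rightarrow> ennreal" where
  "outer_nn_integral M f =
     (INF g \<in> {g \<in> borel_measurable M. \<forall>x\<in>space M. f x \<le> g x}. nn_integral M g)"

definition inf_conv :: "('a::ab_group_add \<Rightarrow> ereal) \<Rightarrow> ('a \<Rightarrow> ereal) \<Rightarrow> 'a \<Rightarrow> ereal" where
  "inf_conv f g x = (INF y. f (x - y) + g y)"

definition property_tau :: "'a::euclidean_space measure \<Rightarrow> ('a \<Rightarrow> ereal) \<Rightarrow> bool" where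
  "property_tau \<mu> W \<longleftrightarrow>
     (\<forall>f :: 'a \<Rightarrow> real. f \<in> borel_measurable borel \<longrightarrow> bounded (range f) \<longrightarrow>
        outer_nn_integral \<mu> (\<lambda>x. eexp (inf_conv W (\<lambda>y. ereal (f y)) x))
          * (\<integral>\<^sup>+ x. ennreal (exp (- f x)) \<partial>\<mu>) \<le> 1)"

definition reflect :: "'a::euclidean_space measure \<Rightarrow> 'a measure" where
  "reflect \<mu> = distr \<mu> borel uminus"

definition symmetrization :: "'a::euclidean_space measure \<Rightarrow> 'a measure" where
  "symmetrization \<mu> = distr (\<mu> \<Otimes>\<^sub>M reflect \<mu>) borel (\<lambda>(x, y). x + y)"

definition mgf :: "'a::euclidean_space measure \<Rightarrow> 'a \<Rightarrow> ennreal" where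
  "mgf \<mu> x = (\<integral>\<^sup>+ y. ennreal (exp (x \<bullet> y)) \<partial>\<mu>)"

definition log_mgf :: "'a::euclidean_space measure \<Rightarrow> 'a \<Rightarrow> ereal" where
  "log_mgf \<mu> x = (if mgf \<mu> x = \<infinity> then \<infinity> else ereal (ln (enn2real (mgf \<mu> x))))"

definition cramer :: "'a::euclidean_space measure \<Rightarrow> 'a \<Rightarrow> ereal" where
  "cramer \<mu> x = (SUP y. ereal (x \<bullet> y) - log_mgf \<mu> y)"

definition IC :: "real \<Rightarrow> 'a::euclidean_space measure \<Rightarrow> bool" where
  "IC \<beta> \<mu> \<longleftrightarrow> prob_space \<mu> \<and> sets \<mu> = sets borel \<and>
     property_tau \<mu> (\<lambda>x. cramer (symmetrization \<mu>) (x /\<^sub>R \<beta>))"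

definition std_gaussian :: "'a::euclidean_space measure" where
  "std_gaussian = density lborel
     (\<lambda>x::'a. ennreal ((2 * pi) powr (- real DIM('a) / 2) * exp (- (norm x)\<^sup>2 / 2)))"

text \<open>Gaussian = affine image of the standard Gaussian (possibly degenerate).\<close>
definition gaussian :: "'a::euclidean_space measure \<Rightarrow> bool" where
  "gaussian \<mu> \<longleftrightarrow> (\<exists>A b. linear A \<and> \<mu> = distr (std_gaussian :: 'a measure) borel (\<lambda>x. A x + b))"

end

theory Submission
  imports Defs
begin

lemma sets_preimage_borel:
  assumes "f \<in> borel_measurable borel" "S \<in> sets borel"
  shows "{x. f x \<in> S} \<in> sets borel"
  using measurable_sets[OF assms] by (simp add: vimage_def)

lemma emeasure_affine_real:
  fixes S :: "real set"
  assumes S: "S \<in> sets borel" and c: "c \<noteq> 0"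
  shows "emeasure lborel S = ennreal \<bar>c\<bar> * emeasure lborel {x. t + c * x \<in> S}"
proof -
  have "emeasure lborel S = (\<integral>\<^sup>+x. indicator S x \<partial>lborel)"
    using S by simp
  also have "\<dots> = ennreal \<bar>c\<bar> * (\<integral>\<^sup>+x. indicator S (t + c * x) \<partial>lborel)"
    using S c by (intro nn_integral_real_affine) auto
  also have "(\<lambda>x. indicator S (t + c * x) :: ennreal) = indicator {x. t + c * x \<in> S}"
    by (auto simp: indicator_def fun_eq_iff)
  also have "(\<integral>\<^sup>+x. indicator {x. t + c * x \<in> S} x \<partial>lborel) = emeasure lborel {x. t + c * x \<in> S}"
  proof (rule nn_integral_indicator)
    show "{x. t + c * x \<in> S} \<in> sets lborel" using sets_preimage_borel[OF _ S, of "\<lambda>x. t + c * x"] by simp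
  qed
  finally show ?thesis .
qed

lemma bm_split:
  fixes A B C :: "real set"
  assumes A: "A \<in> sets borel" and B: "B \<in> sets borel" and C: "C \<in> sets borel"
    and k: "k \<in> A" and l: "l \<in> B" and mid: "\<And>x y. x \<in> A \<Longrightarrow> y \<in> B \<Longrightarrow> (x + y) / 2 \<in> C"
  shows "emeasure lborel (A \<inter> {..k}) + emeasure lborel (B \<inter> {l..}) \<le> 2 * emeasure lborel C"
proof -
  define m where "m = (k + l) / 2"
  have C1: "C \<inter> {..m} \<in> sets borel" and C2: "C \<inter> {m<..} \<in> sets borel" using C by auto
  have e1: "emeasure lborel (C \<inter> {..m}) = ennreal \<bar>1/2\<bar> * emeasure lborel {x. l/2 + 1/2 * x \<in> C \<inter> {..m}}"
    by (rule emeasure_affine_real[OF C1]) simp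
  have e2: "emeasure lborel (C \<inter> {m<..}) = ennreal \<bar>1/2\<bar> * emeasure lborel {x. k/2 + 1/2 * x \<in> C \<inter> {m<..}}"
    by (rule emeasure_affine_real[OF C2]) simp
  have s1: "A \<inter> {..k} \<subseteq> {x. l/2 + 1/2 * x \<in> C \<inter> {..m}}"
    using mid[OF _ l] by (auto simp: m_def add_divide_distrib add.commute)
  have s2: "B \<inter> {l<..} \<subseteq> {x. k/2 + 1/2 * x \<in> C \<inter> {m<..}}"
    using mid[OF k] by (auto simp: m_def add_divide_distrib)
  have m1: "{x. l/2 + 1/2 * x \<in> C \<inter> {..m}} \<in> sets lborel"
  proof -
    show ?thesis using sets_preimage_borel[OF _ C1, of "\<lambda>x::real. l/2 + 1/2 * x"] by simp
  qed
  have m2: "{x. k/2 + 1/2 * x \<in> C \<inter> {m<..}} \<in> sets lborel"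
  proof -
    show ?thesis using sets_preimage_borel[OF _ C2, of "\<lambda>x::real. k/2 + 1/2 * x"] by simp
  qed
  have "emeasure lborel (B \<inter> {l..}) \<le> emeasure lborel ((B \<inter> {l<..}) \<union> {l})"
    by (rule emeasure_mono) (use B in auto)
  also have "\<dots> \<le> emeasure lborel (B \<inter> {l<..}) + emeasure lborel {l}"
    by (rule emeasure_subadditive) (use B in auto)
  also have "\<dots> = emeasure lborel (B \<inter> {l<..})" by simp
  finally have bl: "emeasure lborel (B \<inter> {l..}) \<le> emeasure lborel (B \<inter> {l<..})" .
  have "emeasure lborel (A \<inter> {..k}) + emeasure lborel (B \<inter> {l..})
      \<le> emeasure lborel {x. l/2 + 1/2 * x \<in> C \<inter> {..m}} + emeasure lborel {x. k/2 + 1/2 * x \<in> C \<inter> {m<..}}"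
    by (intro add_mono order_trans[OF bl] emeasure_mono s1 s2 m1 m2)
  also have "\<dots> = 2 * emeasure lborel (C \<inter> {..m}) + 2 * emeasure lborel (C \<inter> {m<..})"
  proof -
    have "ennreal 2 * ennreal \<bar>1/2\<bar> = ennreal (2 * \<bar>1/2\<bar>)"
      by (rule ennreal_mult[symmetric]) auto
    also have "ennreal (2 * \<bar>1/2\<bar>) = 1" by simp
    finally have h: "ennreal 2 * ennreal \<bar>1/2\<bar> = 1" .
    then show ?thesis unfolding e1 e2
      by (simp add: mult.assoc[symmetric])
  qed
  also have "\<dots> = 2 * emeasure lborel C"
  proof -
    have "emeasure lborel (C \<inter> {..m}) + emeasure lborel (C \<inter> {m<..}) = emeasure lborel ((C \<inter> {..m}) \<union> (C \<inter> {m<..}))"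
      by (rule plus_emeasure) (use C in auto)
    also have "(C \<inter> {..m}) \<union> (C \<inter> {m<..}) = C" by auto
    finally show ?thesis by (simp add: distrib_left[symmetric])
  qed
  finally show ?thesis .
qed

lemma sup_left:
  fixes A :: "real set"
  assumes A: "A \<in> sets borel" and ne: "A \<noteq> {}"
  shows "emeasure lborel A \<le> (SUP k\<in>A. emeasure lborel (A \<inter> {..k}))"
proof (cases "\<exists>k\<in>A. \<forall>x\<in>A. x \<le> k")
  case True
  then obtain k where k: "k \<in> A" "\<forall>x\<in>A. x \<le> k" by blast
  then have "A \<inter> {..k} = A" by auto
  then show ?thesis using k(1) by (metis SUP_upper order_refl)
next
  case False
  then have nomax: "\<forall>k\<in>A. \<exists>x\<in>A. k < x" by (auto simp: not_le)
  have "\<exists>t::nat \<Rightarrow> real. incseq t \<and> (\<forall>n. \<exists>k\<in>A. t n \<le> k) \<and> A \<subseteq> (\<Union>n. {..t n})"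
  proof (cases "bdd_above A")
    case True
    define t where "t n = Sup A - inverse (real (Suc n))" for n
    have "incseq t" unfolding t_def
      by (intro incseq_SucI) (simp add: field_simps)
    moreover have "\<exists>k\<in>A. t n \<le> k" for n
    proof -
      have "t n < Sup A" by (simp add: t_def)
      then obtain k where "k \<in> A" "t n < k" using less_cSup_iff[OF ne True] by blast
      then show ?thesis by (meson less_imp_le)
    qed
    moreover have "A \<subseteq> (\<Union>n. {..t n})"
    proof
      fix x assume x: "x \<in> A"
      have "x \<le> Sup A" using cSup_upper[OF x True] .
      moreover have "x \<noteq> Sup A"
      proof
        assume "x = Sup A"
        then obtain y where "y \<in> A" "Sup A < y" using nomax x by blast
        then show False using cSup_upper[OF _ True] by fastforce
      qed
      ultimately have "0 < Sup A - x" by simp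
      then obtain n where "inverse (real (Suc n)) < Sup A - x"
        using reals_Archimedean by blast
      then show "x \<in> (\<Union>n. {..t n})" by (auto simp: t_def intro!: exI[of _ n])
    qed
    ultimately show ?thesis by blast
  next
    case False
    define t where "t n = real n" for n
    have "incseq t" unfolding t_def by (simp add: incseq_def)
    moreover have "\<exists>k\<in>A. t n \<le> k" for n
      using False unfolding bdd_above_def by (auto simp: not_le intro: less_imp_le)
    moreover have "A \<subseteq> (\<Union>n. {..t n})"
      using real_arch_simple by (auto simp: t_def)
    ultimately show ?thesis by blast
  qed
  then obtain t where t: "incseq t" "\<And>n. \<exists>k\<in>A. t n \<le> k" "A \<subseteq> (\<Union>n. {..t n})" by blast
  have "A = (\<Union>n. A \<inter> {..t n})" using t(3) by auto
  then have "emeasure lborel A = emeasure lborel (\<Union>n. A \<inter> {..t n})" by simp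
  also have "\<dots> = (SUP n. emeasure lborel (A \<inter> {..t n}))"
  proof (rule SUP_emeasure_incseq[symmetric])
    show "range (\<lambda>n. A \<inter> {..t n}) \<subseteq> sets lborel" using A by auto
    show "incseq (\<lambda>n. A \<inter> {..t n})" using t(1) unfolding incseq_def
      by (auto intro: order_trans)
  qed
  also have "\<dots> \<le> (SUP k\<in>A. emeasure lborel (A \<inter> {..k}))"
  proof (rule SUP_least)
    fix n
    obtain k where k: "k \<in> A" "t n \<le> k" using t(2) by blast
    have "emeasure lborel (A \<inter> {..t n}) \<le> emeasure lborel (A \<inter> {..k})"
      by (rule emeasure_mono) (use k A in auto)
    also have "\<dots> \<le> (SUP k\<in>A. emeasure lborel (A \<inter> {..k}))"
      using k(1) by (rule SUP_upper)
    finally show "emeasure lborel (A \<inter> {..t n}) \<le> \<dots>" .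
  qed
  finally show ?thesis .
qed

lemma sup_right:
  fixes B :: "real set"
  assumes B: "B \<in> sets borel" and ne: "B \<noteq> {}"
  shows "emeasure lborel B \<le> (SUP l\<in>B. emeasure lborel (B \<inter> {l..}))"
proof -
  define B' where "B' = {x. 0 + (-1) * x \<in> B}"
  have B'm: "B' \<in> sets borel" unfolding B'_def
    by (rule sets_preimage_borel[OF _ B]) simp
  have "emeasure lborel B = ennreal \<bar>-1\<bar> * emeasure lborel B'"
    unfolding B'_def by (rule emeasure_affine_real[OF B]) simp
  also have "\<dots> = emeasure lborel B'" by simp
  also have "\<dots> \<le> (SUP k\<in>B'. emeasure lborel (B' \<inter> {..k}))"
    by (rule sup_left[OF B'm]) (use ne in \<open>auto simp: B'_def intro: exI[of _ "- x" for x]\<close>)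
  also have "\<dots> \<le> (SUP l\<in>B. emeasure lborel (B \<inter> {l..}))"
  proof (rule SUP_least)
    fix k assume k: "k \<in> B'"
    have Bm: "B \<inter> {-k..} \<in> sets borel" using B by auto
    have "emeasure lborel (B \<inter> {-k..}) = ennreal \<bar>-1\<bar> * emeasure lborel {x. 0 + (-1) * x \<in> B \<inter> {-k..}}"
      by (rule emeasure_affine_real[OF Bm]) simp
    also have "{x. 0 + (-1) * x \<in> B \<inter> {-k..}} = B' \<inter> {..k}" by (auto simp: B'_def)
    finally have "emeasure lborel (B' \<inter> {..k}) = emeasure lborel (B \<inter> {-k..})" by simp
    also have "\<dots> \<le> (SUP l\<in>B. emeasure lborel (B \<inter> {l..}))"
      using k by (intro SUP_upper) (auto simp: B'_def)
    finally show "emeasure lborel (B' \<inter> {..k}) \<le> \<dots>" .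
  qed
  finally show ?thesis .
qed

lemma bm1:
  fixes A B C :: "real set"
  assumes A: "A \<in> sets borel" and B: "B \<in> sets borel" and C: "C \<in> sets borel"
    and neA: "A \<noteq> {}" and neB: "B \<noteq> {}"
    and mid: "\<And>x y. x \<in> A \<Longrightarrow> y \<in> B \<Longrightarrow> (x + y) / 2 \<in> C"
  shows "emeasure lborel A + emeasure lborel B \<le> 2 * emeasure lborel C"
proof -
  have "emeasure lborel A + emeasure lborel B \<le>
     (SUP k\<in>A. emeasure lborel (A \<inter> {..k})) + (SUP l\<in>B. emeasure lborel (B \<inter> {l..}))"
    by (intro add_mono sup_left sup_right A B neA neB)
  also have "\<dots> = (SUP k\<in>A. SUP l\<in>B. emeasure lborel (A \<inter> {..k}) + emeasure lborel (B \<inter> {l..}))"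
    by (subst ennreal_SUP_add_left[OF neA, symmetric]) (simp add: ennreal_SUP_add_right[OF neB])
  also have "\<dots> \<le> 2 * emeasure lborel C"
    by (intro SUP_least bm_split[OF A B C _ _ mid]) auto
  finally show ?thesis .
qed

lemma emeasure_lborel_Ici_real: "emeasure lborel {0::real..} = \<infinity>"
proof (rule ccontr)
  assume "emeasure lborel {0::real..} \<noteq> \<infinity>"
  then obtain c where c: "emeasure lborel {0::real..} = ennreal c" "0 \<le> c"
    by (cases "emeasure lborel {0::real..}" rule: ennreal_cases) auto
  have "ennreal (c + 1) = emeasure lborel {0..<c+1}" using c by simp
  also have "\<dots> \<le> emeasure lborel {0::real..}" by (rule emeasure_mono) auto
  finally show False using c by simp
qed

lemma layer_point:
  fixes v :: ennreal
  shows "(\<integral>\<^sup>+r. indicator {0..} r * indicator {r. ennreal r < v} r \<partial>lborel) = v"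
proof -
  have "(\<integral>\<^sup>+r. indicator {0..} r * indicator {r. ennreal r < v} r \<partial>lborel)
      = (\<integral>\<^sup>+r. indicator ({0..} \<inter> {r. ennreal r < v}) r \<partial>lborel)"
    by (simp add: indicator_inter_arith)
  also have "\<dots> = emeasure lborel ({0..} \<inter> {r. ennreal r < v})"
    by (rule nn_integral_indicator) measurable
  also have "\<dots> = v"
  proof (cases v rule: ennreal_cases)
    case (real w)
    then have "{0..} \<inter> {r. ennreal r < v} = {0..<w}" by (auto simp: ennreal_less_iff)
    then show ?thesis using real by simp
  next
    case top
    then have "{0..} \<inter> {r. ennreal r < v} = {0::real..}" by auto
    then show ?thesis using top emeasure_lborel_Ici_real by simp
  qed
  finally show ?thesis .
qed

lemma layer_cake:
  fixes g :: "real \<Rightarrow> ennreal"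
  assumes g[measurable]: "g \<in> borel_measurable borel"
  shows "(\<integral>\<^sup>+x. g x \<partial>lborel) = (\<integral>\<^sup>+r. indicator {0..} r * emeasure lborel {x. ennreal r < g x} \<partial>lborel)"
proof -
  have "(\<integral>\<^sup>+x. g x \<partial>lborel) = (\<integral>\<^sup>+x. (\<integral>\<^sup>+r. indicator {0..} r * indicator {r. ennreal r < g x} r \<partial>lborel) \<partial>lborel)"
    by (simp add: layer_point)
  also have "\<dots> = (\<integral>\<^sup>+r. (\<integral>\<^sup>+x. indicator {0..} r * indicator {r. ennreal r < g x} r \<partial>lborel) \<partial>lborel)"
  proof -
    have "Measurable.pred (lborel \<Otimes>\<^sub>M lborel) (\<lambda>p::real\<times>real. ennreal (snd p) < g (fst p))"
      by measurable
    then have m: "(\<lambda>(x::real, r::real). indicator {0..} r * indicator {r. ennreal r < g x} r :: ennreal) \<in> borel_measurable (lborel \<Otimes>\<^sub>M lborel)"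
      by (simp add: indicator_def split_beta')
    show ?thesis using lborel_pair.Fubini'[OF m] by simp
  qed
  also have "\<dots> = (\<integral>\<^sup>+r. indicator {0..} r * emeasure lborel {x. ennreal r < g x} \<partial>lborel)"
  proof (rule nn_integral_cong)
    fix r :: real
    have "(\<lambda>x. indicator {r. ennreal r < g x} r :: ennreal) = indicator {x. ennreal r < g x}"
      by (auto simp: indicator_def)
    then show "(\<integral>\<^sup>+x. indicator {0..} r * indicator {r. ennreal r < g x} r \<partial>lborel) = indicator {0..} r * emeasure lborel {x. ennreal r < g x}"
      using nn_integral_indicator[of "{x. ennreal r < g x}" lborel] by (simp add: nn_integral_cmult)
  qed
  finally show ?thesis .
qed

lemma amgm_ennreal:
  fixes a b :: ennreal
  shows "4 * (a * b) \<le> (a + b)^2"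
proof (cases a rule: ennreal_cases)
  case (real x)
  then show ?thesis
  proof (cases b rule: ennreal_cases)
    case (real y)
    have "4 * (x * y) \<le> (x + y)^2" using sum_power2_ge_zero[of "x - y" 0] by (simp add: power2_eq_square algebra_simps)
    then have "ennreal (4 * (x * y)) \<le> ennreal ((x + y)^2)" by simp
    moreover have "ennreal (4 * (x * y)) = 4 * (a * b)" using \<open>a = ennreal x\<close> \<open>0 \<le> x\<close> real
      by (simp add: ennreal_mult)
    moreover have "ennreal ((x + y)^2) = (a + b)^2" using \<open>a = ennreal x\<close> \<open>0 \<le> x\<close> real
      by (simp add: ennreal_power[symmetric] ennreal_plus)
    ultimately show ?thesis by simp
  next
    case top
    then show ?thesis by (simp add: top_unique)
  qed
next
  case top
  then show ?thesis by simp
qed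

lemma pl_from_sum:
  fixes a b X :: ennreal
  assumes "a + b \<le> 2 * X"
  shows "a * b \<le> X^2"
proof -
  have "4 * (a * b) \<le> (a + b)^2" by (rule amgm_ennreal)
  also have "\<dots> \<le> (2 * X)^2" using assms by (intro power_mono) auto
  also have "\<dots> = 4 * X^2" by (simp add: power_mult_distrib)
  finally show ?thesis by (subst (asm) ennreal_mult_le_mult_iff) auto
qed

lemma meas_level_real:
  fixes f :: "real \<Rightarrow> real"
  assumes [measurable]: "f \<in> borel_measurable borel"
  shows "(\<lambda>r. emeasure lborel {x. r < f x}) \<in> borel_measurable borel"
proof -
  have "(\<lambda>r. emeasure lborel {x. r < f x}) \<in> borel_measurable lborel"
  proof (rule lborel.measurable_emeasure)
    have "Measurable.pred (lborel \<Otimes>\<^sub>M lborel) (\<lambda>p::real\<times>real. fst p < f (snd p))" by measurable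
    then show "{x \<in> space (lborel \<Otimes>\<^sub>M lborel). snd x \<in> {y. fst x < f y}} \<in> sets (lborel \<Otimes>\<^sub>M lborel)"
      by (simp add: pred_def space_pair_measure)
  qed auto
  then show ?thesis by simp
qed

lemma meas_level_enn:
  fixes f :: "real \<Rightarrow> ennreal"
  assumes [measurable]: "f \<in> borel_measurable borel"
  shows "(\<lambda>r. emeasure lborel {x. ennreal r < f x}) \<in> borel_measurable borel"
proof -
  have "(\<lambda>r. emeasure lborel {x. ennreal r < f x}) \<in> borel_measurable lborel"
  proof (rule lborel.measurable_emeasure)
    have "Measurable.pred (lborel \<Otimes>\<^sub>M lborel) (\<lambda>p::real\<times>real. ennreal (fst p) < f (snd p))" by measurable
    then show "{x \<in> space (lborel \<Otimes>\<^sub>M lborel). snd x \<in> {y. ennreal (fst x) < f y}} \<in> sets (lborel \<Otimes>\<^sub>M lborel)"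
      by (simp add: pred_def space_pair_measure)
  qed auto
  then show ?thesis by simp
qed

lemma pl1_core:
  fixes p q :: "real \<Rightarrow> real" and k :: "real \<Rightarrow> ennreal" and s :: real
  assumes [measurable]: "p \<in> borel_measurable borel" "q \<in> borel_measurable borel" "k \<in> borel_measurable borel"
    and p0: "\<And>x. 0 \<le> p x" and q0: "\<And>x. 0 \<le> q x"
    and ps: "\<And>x. p x \<le> s" and qs: "\<And>x. q x \<le> s"
    and pne: "\<And>r. 0 \<le> r \<Longrightarrow> r < s \<Longrightarrow> \<exists>x. r < p x"
    and qne: "\<And>r. 0 \<le> r \<Longrightarrow> r < s \<Longrightarrow> \<exists>x. r < q x"
    and hyp: "\<And>x y. ennreal (p x * q y) \<le> k ((x + y) / 2) ^ 2"
  shows "(\<integral>\<^sup>+x. ennreal (p x) \<partial>lborel) + (\<integral>\<^sup>+x. ennreal (q x) \<partial>lborel) \<le> 2 * (\<integral>\<^sup>+x. k x \<partial>lborel)"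
proof -
  have lc: "(\<integral>\<^sup>+x. ennreal (f x) \<partial>lborel) = (\<integral>\<^sup>+r. indicator {0..<s} r * emeasure lborel {x. r < f x} \<partial>lborel)"
    if [measurable]: "f \<in> borel_measurable borel" and f0: "\<And>x. 0 \<le> f x" and fs: "\<And>x. f x \<le> s" for f :: "real \<Rightarrow> real"
  proof -
    have "(\<integral>\<^sup>+x. ennreal (f x) \<partial>lborel) = (\<integral>\<^sup>+r. indicator {0..} r * emeasure lborel {x. ennreal r < ennreal (f x)} \<partial>lborel)"
      using layer_cake[of "\<lambda>x. ennreal (f x)"] by simp
    also have "\<dots> = (\<integral>\<^sup>+r. indicator {0..<s} r * emeasure lborel {x. r < f x} \<partial>lborel)"
    proof (rule nn_integral_cong)
      fix r :: real
      show "indicator {0..} r * emeasure lborel {x. ennreal r < ennreal (f x)} = indicator {0..<s} r * emeasure lborel {x. r < f x}"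
      proof (cases "0 \<le> r")
        case True
        then have e: "{x. ennreal r < ennreal (f x)} = {x. r < f x}" by (auto simp: ennreal_less_iff)
        show ?thesis
        proof (cases "r < s")
          case True
          then show ?thesis using e \<open>0 \<le> r\<close> by simp
        next
          case False
          then have "{x. r < f x} = {}" using fs by (auto simp: not_less intro: order_trans)
          then show ?thesis using e by simp
        qed
      qed simp
    qed
    finally show ?thesis .
  qed
  have bm: "emeasure lborel {x. r < p x} + emeasure lborel {x. r < q x} \<le> 2 * emeasure lborel {x. ennreal r < k x}"
    if r: "0 \<le> r" "r < s" for r
  proof (rule bm1)
    show "{x. r < p x} \<in> sets borel" "{x. r < q x} \<in> sets borel" "{x. ennreal r < k x} \<in> sets borel"
      by measurable
    show "{x. r < p x} \<noteq> {}" "{x. r < q x} \<noteq> {}" using pne[OF r] qne[OF r] by auto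
    fix x y assume x: "x \<in> {x. r < p x}" and y: "y \<in> {x. r < q x}"
    have "r * r < p x * q y" using x y r by (intro mult_strict_mono) auto
    then have "ennreal (r^2) < ennreal (p x * q y)" using r by (subst ennreal_less_iff) (auto simp: power2_eq_square)
    also have "\<dots> \<le> k ((x + y) / 2) ^ 2" by (rule hyp)
    finally have "ennreal r ^ 2 < k ((x + y) / 2) ^ 2" using r by (simp add: ennreal_power)
    then have "ennreal r < k ((x + y) / 2)" by (meson power_mono zero_le not_le)
    then show "(x + y) / 2 \<in> {x. ennreal r < k x}" by simp
  qed
  have [measurable]: "(\<lambda>r. emeasure lborel {x. ennreal r < k x}) \<in> borel_measurable borel"
    by (rule meas_level_enn) measurable
  have [measurable]: "(\<lambda>r. emeasure lborel {x. r < p x}) \<in> borel_measurable borel"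
    by (rule meas_level_real) measurable
  have [measurable]: "(\<lambda>r. emeasure lborel {x. r < q x}) \<in> borel_measurable borel"
    by (rule meas_level_real) measurable
  have "(\<integral>\<^sup>+x. ennreal (p x) \<partial>lborel) + (\<integral>\<^sup>+x. ennreal (q x) \<partial>lborel)
     = (\<integral>\<^sup>+r. indicator {0..<s} r * emeasure lborel {x. r < p x} \<partial>lborel) + (\<integral>\<^sup>+r. indicator {0..<s} r * emeasure lborel {x. r < q x} \<partial>lborel)"
    by (simp add: lc p0 q0 ps qs)
  also have "\<dots> = (\<integral>\<^sup>+r. indicator {0..<s} r * emeasure lborel {x. r < p x} + indicator {0..<s} r * emeasure lborel {x. r < q x} \<partial>lborel)"
    by (rule nn_integral_add[symmetric]) measurable
  also have "\<dots> \<le> (\<integral>\<^sup>+r. 2 * (indicator {0..} r * emeasure lborel {x. ennreal r < k x}) \<partial>lborel)"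
  proof (rule nn_integral_mono)
    fix r :: real
    show "indicator {0..<s} r * emeasure lborel {x. r < p x} + indicator {0..<s} r * emeasure lborel {x. r < q x}
        \<le> 2 * (indicator {0..} r * emeasure lborel {x. ennreal r < k x})"
    proof (cases "0 \<le> r \<and> r < s")
      case True
      then show ?thesis using bm[of r] by simp
    qed auto
  qed
  also have "\<dots> = 2 * (\<integral>\<^sup>+r. indicator {0..} r * emeasure lborel {x. ennreal r < k x} \<partial>lborel)"
    by (rule nn_integral_cmult) measurable
  also have "\<dots> = 2 * (\<integral>\<^sup>+x. k x \<partial>lborel)"
    by (simp only: layer_cake[of k, symmetric] \<open>k \<in> borel_measurable borel\<close>)
  finally show ?thesis .
qed

lemma pl1_bdd:
  fixes p q :: "real \<Rightarrow> real" and k :: "real \<Rightarrow> ennreal" and M :: real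
  assumes [measurable]: "p \<in> borel_measurable borel" "q \<in> borel_measurable borel" "k \<in> borel_measurable borel"
    and p0: "\<And>x. 0 \<le> p x" and q0: "\<And>x. 0 \<le> q x"
    and pM: "\<And>x. p x \<le> M" and qM: "\<And>x. q x \<le> M"
    and hyp: "\<And>x y. ennreal (p x * q y) \<le> k ((x + y) / 2) ^ 2"
  shows "(\<integral>\<^sup>+x. ennreal (p x) \<partial>lborel) * (\<integral>\<^sup>+x. ennreal (q x) \<partial>lborel) \<le> (\<integral>\<^sup>+x. k x \<partial>lborel) ^ 2"
proof -
  define P where "P = (SUP x. p x)"
  define Q where "Q = (SUP x. q x)"
  have bp: "bdd_above (range p)" using pM by (intro bdd_aboveI2) auto
  have bq: "bdd_above (range q)" using qM by (intro bdd_aboveI2) auto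
  have pP: "p x \<le> P" for x unfolding P_def using bp by (intro cSUP_upper) auto
  have qQ: "q x \<le> Q" for x unfolding Q_def using bq by (intro cSUP_upper) auto
  show ?thesis
  proof (cases "P = 0 \<or> Q = 0")
    case True
    then show ?thesis
    proof
      assume "P = 0"
      then have "\<And>x. p x = 0" using pP p0 by (metis order_antisym)
      then show ?thesis by simp
    next
      assume "Q = 0"
      then have "\<And>x. q x = 0" using qQ q0 by (metis order_antisym)
      then show ?thesis by simp
    qed
  next
    case False
    have P0: "0 < P" using False pP[of 0] p0[of 0] by linarith
    have Q0: "0 < Q" using False qQ[of 0] q0[of 0] by linarith
    define c where "c = sqrt (Q / P)"
    define s where "s = sqrt (P * Q)"
    have c0: "0 < c" using P0 Q0 by (simp add: c_def)
    have cP: "c * P = s"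
    proof -
      have "c * P = sqrt (Q / P) * sqrt (P * P)" using P0 by (simp add: c_def)
      also have "\<dots> = sqrt (Q / P * (P * P))" by (rule real_sqrt_mult[symmetric])
      also have "Q / P * (P * P) = P * Q" using P0 by (simp add: field_simps)
      finally show ?thesis by (simp add: s_def)
    qed
    have cc: "c * c = Q / P" using P0 Q0 unfolding c_def by (metis real_sqrt_mult_self abs_of_nonneg less_imp_le divide_nonneg_nonneg)
    have Qc: "Q / c = s"
    proof -
      have "Q = c * c * P" using cc P0 by simp
      then have "Q / c = c * P" using c0 by (simp add: field_simps)
      then show ?thesis using cP by simp
    qed
    have core: "(\<integral>\<^sup>+x. ennreal (c * p x) \<partial>lborel) + (\<integral>\<^sup>+x. ennreal (q x / c) \<partial>lborel) \<le> 2 * (\<integral>\<^sup>+x. k x \<partial>lborel)"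
    proof (rule pl1_core[where s = s])
      show "(\<lambda>x. c * p x) \<in> borel_measurable borel" "(\<lambda>x. q x / c) \<in> borel_measurable borel" "k \<in> borel_measurable borel"
        by measurable
      show "0 \<le> c * p x" "0 \<le> q x / c" for x using c0 p0 q0 by auto
      show "c * p x \<le> s" for x using pP[of x] c0 cP by (metis mult_left_mono less_imp_le)
      show "q x / c \<le> s" for x using qQ[of x] c0 Qc by (metis divide_right_mono less_imp_le)
      show "\<exists>x. r < c * p x" if "0 \<le> r" "r < s" for r
      proof -
        have "r / c < P" using that cP c0 by (simp add: field_simps)
        then obtain x where "r / c < p x" using less_cSUP_iff[of UNIV p] bp unfolding P_def by auto
        then show ?thesis using c0 by (auto simp: field_simps)
      qed
      show "\<exists>x. r < q x / c" if "0 \<le> r" "r < s" for r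
      proof -
        have "r * c < Q" using that Qc c0 by (simp add: field_simps)
        then obtain x where "r * c < q x" using less_cSUP_iff[of UNIV q] bq unfolding Q_def by auto
        then show ?thesis using c0 by (auto simp: field_simps)
      qed
      show "ennreal (c * p x * (q y / c)) \<le> k ((x + y) / 2) ^ 2" for x y
        using hyp[of x y] c0 by simp
    qed
    have "(\<integral>\<^sup>+x. ennreal (c * p x) \<partial>lborel) * (\<integral>\<^sup>+x. ennreal (q x / c) \<partial>lborel) \<le> (\<integral>\<^sup>+x. k x \<partial>lborel) ^ 2"
      by (rule pl_from_sum[OF core])
    moreover have "(\<integral>\<^sup>+x. ennreal (c * p x) \<partial>lborel) = ennreal c * (\<integral>\<^sup>+x. ennreal (p x) \<partial>lborel)"
      using c0 by (simp add: ennreal_mult nn_integral_cmult[symmetric] p0)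
    moreover have "(\<integral>\<^sup>+x. ennreal (q x / c) \<partial>lborel) = ennreal (1 / c) * (\<integral>\<^sup>+x. ennreal (q x) \<partial>lborel)"
    proof -
      have "(\<integral>\<^sup>+x. ennreal (q x / c) \<partial>lborel) = (\<integral>\<^sup>+x. ennreal (1 / c) * ennreal (q x) \<partial>lborel)"
      proof (rule nn_integral_cong)
        fix x
        have "ennreal (q x / c) = ennreal (1 / c * q x)" by simp
        also have "\<dots> = ennreal (1 / c) * ennreal (q x)" using c0 by (intro ennreal_mult') simp
        finally show "ennreal (q x / c) = ennreal (1 / c) * ennreal (q x)" .
      qed
      also have "\<dots> = ennreal (1 / c) * (\<integral>\<^sup>+x. ennreal (q x) \<partial>lborel)"
        by (rule nn_integral_cmult) measurable
      finally show ?thesis .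
    qed
    moreover have "ennreal c * ennreal (1 / c) = 1" using c0 by (simp flip: ennreal_mult)
    ultimately show ?thesis
      by (metis (no_types, lifting) mult.assoc mult.commute mult_1)
  qed
qed

lemma SUP_min_nat_ennreal: "(SUP n. min (a::ennreal) (of_nat n)) = a"
proof -
  have "(SUP n. min a (of_nat n)) = min a (SUP n. of_nat n :: ennreal)"
    by (simp add: inf_min[symmetric] inf_SUP)
  also have "\<dots> = a" by (simp add: ennreal_SUP_of_nat_eq_top)
  finally show ?thesis .
qed

lemma nn_integral_trunc:
  fixes f :: "'a \<Rightarrow> ennreal"
  assumes [measurable]: "f \<in> borel_measurable M"
  shows "(\<integral>\<^sup>+x. f x \<partial>M) = (SUP n. \<integral>\<^sup>+x. min (f x) (of_nat n) \<partial>M)"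
proof -
  have "(\<integral>\<^sup>+x. f x \<partial>M) = (\<integral>\<^sup>+x. (SUP n. min (f x) (of_nat n)) \<partial>M)"
    by (simp add: SUP_min_nat_ennreal)
  also have "\<dots> = (SUP n. \<integral>\<^sup>+x. min (f x) (of_nat n) \<partial>M)"
  proof (rule nn_integral_monotone_convergence_SUP)
    show "incseq (\<lambda>n x. min (f x) (of_nat n))"
    proof (intro monoI le_funI)
      fix m n :: nat and x assume "m \<le> n"
      then show "min (f x) (of_nat m) \<le> min (f x) (of_nat n)" by (intro min.mono) simp_all
    qed
  qed measurable
  finally show ?thesis .
qed

lemma pl1:
  fixes f g k :: "real \<Rightarrow> ennreal"
  assumes [measurable]: "f \<in> borel_measurable borel" "g \<in> borel_measurable borel" "k \<in> borel_measurable borel"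
    and hyp: "\<And>x y. f x * g y \<le> k ((x + y) / 2) ^ 2"
  shows "(\<integral>\<^sup>+x. f x \<partial>lborel) * (\<integral>\<^sup>+x. g x \<partial>lborel) \<le> (\<integral>\<^sup>+x. k x \<partial>lborel) ^ 2"
proof -
  have trunc: "(\<integral>\<^sup>+x. min (f x) (of_nat N) \<partial>lborel) * (\<integral>\<^sup>+x. min (g x) (of_nat N) \<partial>lborel) \<le> (\<integral>\<^sup>+x. k x \<partial>lborel) ^ 2" for N
  proof -
    define p where "p x = enn2real (min (f x) (of_nat N))" for x
    define q where "q x = enn2real (min (g x) (of_nat N))" for x
    have ep: "ennreal (p x) = min (f x) (of_nat N)" for x
      unfolding p_def by (rule ennreal_enn2real) (rule le_less_trans[OF min.cobounded2 of_nat_less_top])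
    have eq: "ennreal (q x) = min (g x) (of_nat N)" for x
      unfolding q_def by (rule ennreal_enn2real) (rule le_less_trans[OF min.cobounded2 of_nat_less_top])
    have "(\<integral>\<^sup>+x. ennreal (p x) \<partial>lborel) * (\<integral>\<^sup>+x. ennreal (q x) \<partial>lborel) \<le> (\<integral>\<^sup>+x. k x \<partial>lborel) ^ 2"
    proof (rule pl1_bdd[where M = "real N"])
      show "p \<in> borel_measurable borel" "q \<in> borel_measurable borel" "k \<in> borel_measurable borel"
        unfolding p_def q_def by measurable
      show "0 \<le> p x" "0 \<le> q x" for x by (simp_all add: p_def q_def)
      show "p x \<le> real N" for x unfolding p_def
        using enn2real_mono[OF min.cobounded2 of_nat_less_top] by simp
      show "q x \<le> real N" for x unfolding q_def
        using enn2real_mono[OF min.cobounded2 of_nat_less_top] by simp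
      show "ennreal (p x * q y) \<le> k ((x + y) / 2) ^ 2" for x y
      proof -
        have "ennreal (p x * q y) = ennreal (p x) * ennreal (q y)"
          by (rule ennreal_mult) (simp_all add: p_def q_def)
        also have "\<dots> \<le> f x * g y" unfolding ep eq by (intro mult_mono) auto
        also have "\<dots> \<le> k ((x + y) / 2) ^ 2" by (rule hyp)
        finally show ?thesis .
      qed
    qed
    then show ?thesis by (simp add: ep eq)
  qed
  have "(\<integral>\<^sup>+x. f x \<partial>lborel) * (\<integral>\<^sup>+x. g x \<partial>lborel)
      = (SUP n. \<integral>\<^sup>+x. min (f x) (of_nat n) \<partial>lborel) * (SUP m. \<integral>\<^sup>+x. min (g x) (of_nat m) \<partial>lborel)"
    by (simp add: nn_integral_trunc[of f] nn_integral_trunc[of g])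
  also have "\<dots> = (SUP m. SUP n. (\<integral>\<^sup>+x. min (f x) (of_nat n) \<partial>lborel) * (\<integral>\<^sup>+x. min (g x) (of_nat m) \<partial>lborel))"
    by (simp add: SUP_mult_right_ennreal SUP_mult_left_ennreal)
  also have "\<dots> \<le> (\<integral>\<^sup>+x. k x \<partial>lborel) ^ 2"
  proof (intro SUP_least)
    fix m n :: nat
    let ?N = "max n m"
    have "(\<integral>\<^sup>+x. min (f x) (of_nat n) \<partial>lborel) * (\<integral>\<^sup>+x. min (g x) (of_nat m) \<partial>lborel)
       \<le> (\<integral>\<^sup>+x. min (f x) (of_nat ?N) \<partial>lborel) * (\<integral>\<^sup>+x. min (g x) (of_nat ?N) \<partial>lborel)"
      by (intro mult_mono nn_integral_mono min.mono) auto
    also have "\<dots> \<le> (\<integral>\<^sup>+x. k x \<partial>lborel) ^ 2" by (rule trunc)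
    finally show "(\<integral>\<^sup>+x. min (f x) (of_nat n) \<partial>lborel) * (\<integral>\<^sup>+x. min (g x) (of_nat m) \<partial>lborel) \<le> (\<integral>\<^sup>+x. k x \<partial>lborel) ^ 2" .
  qed
  finally show ?thesis .
qed

lemma plI:
  fixes I :: "'i set"
  assumes "finite I"
  shows "\<forall>f g k. f \<in> borel_measurable (Pi\<^sub>M I (\<lambda>_. lborel :: real measure))
     \<longrightarrow> g \<in> borel_measurable (Pi\<^sub>M I (\<lambda>_. lborel :: real measure))
     \<longrightarrow> k \<in> borel_measurable (Pi\<^sub>M I (\<lambda>_. lborel :: real measure))
     \<longrightarrow> (\<forall>x\<in>space (Pi\<^sub>M I (\<lambda>_. lborel :: real measure)). \<forall>y\<in>space (Pi\<^sub>M I (\<lambda>_. lborel :: real measure)).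
            f x * g y \<le> k (restrict (\<lambda>j. (x j + y j) / 2) I) ^ 2)
     \<longrightarrow> (\<integral>\<^sup>+x. f x \<partial>Pi\<^sub>M I (\<lambda>_. lborel)) * (\<integral>\<^sup>+x. g x \<partial>Pi\<^sub>M I (\<lambda>_. lborel)) \<le> (\<integral>\<^sup>+x. k x \<partial>Pi\<^sub>M I (\<lambda>_. lborel)) ^ 2"
  using assms
proof (induction I rule: finite_induct)
  case empty
  show ?case
  proof (intro allI impI)
    fix f g k :: "('i \<Rightarrow> real) \<Rightarrow> ennreal"
    assume h: "\<forall>x\<in>space (Pi\<^sub>M {} (\<lambda>_. lborel :: real measure)). \<forall>y\<in>space (Pi\<^sub>M {} (\<lambda>_. lborel :: real measure)).
            f x * g y \<le> k (restrict (\<lambda>j. (x j + y j) / 2) {}) ^ 2"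
    have "f (\<lambda>_. undefined) * g (\<lambda>_. undefined) \<le> k (\<lambda>_. undefined) ^ 2"
      using h by (simp add: PiM_empty)
    then show "(\<integral>\<^sup>+x. f x \<partial>Pi\<^sub>M {} (\<lambda>_. lborel)) * (\<integral>\<^sup>+x. g x \<partial>Pi\<^sub>M {} (\<lambda>_. lborel)) \<le> (\<integral>\<^sup>+x. k x \<partial>Pi\<^sub>M {} (\<lambda>_. lborel)) ^ 2"
      by (simp add: PiM_empty nn_integral_count_space_finite)
  qed
next
  case (insert i I)
  interpret product_sigma_finite "\<lambda>_::'i. lborel :: real measure" by standard
  show ?case
  proof (intro allI impI)
    fix f g k :: "('i \<Rightarrow> real) \<Rightarrow> ennreal"
    assume [measurable]: "f \<in> borel_measurable (Pi\<^sub>M (insert i I) (\<lambda>_. lborel :: real measure))"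
      "g \<in> borel_measurable (Pi\<^sub>M (insert i I) (\<lambda>_. lborel :: real measure))"
      "k \<in> borel_measurable (Pi\<^sub>M (insert i I) (\<lambda>_. lborel :: real measure))"
    assume h: "\<forall>x\<in>space (Pi\<^sub>M (insert i I) (\<lambda>_. lborel :: real measure)). \<forall>y\<in>space (Pi\<^sub>M (insert i I) (\<lambda>_. lborel :: real measure)).
            f x * g y \<le> k (restrict (\<lambda>j. (x j + y j) / 2) (insert i I)) ^ 2"
    define F where "F s = (\<integral>\<^sup>+x. f (x(i := s)) \<partial>Pi\<^sub>M I (\<lambda>_. lborel))" for s
    define G where "G s = (\<integral>\<^sup>+x. g (x(i := s)) \<partial>Pi\<^sub>M I (\<lambda>_. lborel))" for s
    define K where "K s = (\<integral>\<^sup>+x. k (x(i := s)) \<partial>Pi\<^sub>M I (\<lambda>_. lborel))" for s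
    have eF: "(\<integral>\<^sup>+x. f x \<partial>Pi\<^sub>M (insert i I) (\<lambda>_. lborel)) = (\<integral>\<^sup>+s. F s \<partial>lborel)"
      unfolding F_def by (rule product_nn_integral_insert_rev) (use insert in auto)
    have eG: "(\<integral>\<^sup>+x. g x \<partial>Pi\<^sub>M (insert i I) (\<lambda>_. lborel)) = (\<integral>\<^sup>+s. G s \<partial>lborel)"
      unfolding G_def by (rule product_nn_integral_insert_rev) (use insert in auto)
    have eK: "(\<integral>\<^sup>+x. k x \<partial>Pi\<^sub>M (insert i I) (\<lambda>_. lborel)) = (\<integral>\<^sup>+s. K s \<partial>lborel)"
      unfolding K_def by (rule product_nn_integral_insert_rev) (use insert in auto)
    have upd2: "(\<lambda>p. (snd p)(i := fst p)) \<in> measurable (lborel \<Otimes>\<^sub>M Pi\<^sub>M I (\<lambda>_. lborel)) (Pi\<^sub>M (insert i I) (\<lambda>_. lborel :: real measure))"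
      by (rule measurable_fun_upd[where J = I]) auto
    interpret sI: sigma_finite_measure "Pi\<^sub>M I (\<lambda>_. lborel :: real measure)"
      by (rule sigma_finite) (use insert in auto)
    have mgen: "(\<lambda>s. \<integral>\<^sup>+x. h (x(i := s)) \<partial>Pi\<^sub>M I (\<lambda>_. lborel)) \<in> borel_measurable borel"
      if hm: "h \<in> borel_measurable (Pi\<^sub>M (insert i I) (\<lambda>_. lborel :: real measure))" for h :: "('i \<Rightarrow> real) \<Rightarrow> ennreal"
    proof -
      have "(\<lambda>s. \<integral>\<^sup>+x. h (x(i := s)) \<partial>Pi\<^sub>M I (\<lambda>_. lborel)) \<in> borel_measurable lborel"
      proof (rule sI.borel_measurable_nn_integral)
        have "h \<circ> (\<lambda>p. (snd p)(i := fst p)) \<in> borel_measurable (lborel \<Otimes>\<^sub>M Pi\<^sub>M I (\<lambda>_. lborel))"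
          by (rule measurable_comp[OF upd2 hm])
        then show "(\<lambda>(s, x). h (x(i := s))) \<in> borel_measurable (lborel \<Otimes>\<^sub>M Pi\<^sub>M I (\<lambda>_. lborel))"
          by (simp add: comp_def split_beta')
      qed
      then show ?thesis by simp
    qed
    have mF: "F \<in> borel_measurable borel" unfolding F_def by (rule mgen) measurable
    have mG: "G \<in> borel_measurable borel" unfolding G_def by (rule mgen) measurable
    have mK: "K \<in> borel_measurable borel" unfolding K_def by (rule mgen) measurable
    have "(\<integral>\<^sup>+s. F s \<partial>lborel) * (\<integral>\<^sup>+s. G s \<partial>lborel) \<le> (\<integral>\<^sup>+s. K s \<partial>lborel) ^ 2"
    proof (rule pl1[OF mF mG mK])
      fix s t :: real
      have upd: "(\<lambda>x. x(i := u)) \<in> measurable (Pi\<^sub>M I (\<lambda>_. lborel)) (Pi\<^sub>M (insert i I) (\<lambda>_. lborel :: real measure))" for u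
        using insert by measurable
      show "F s * G t \<le> K ((s + t) / 2) ^ 2"
        unfolding F_def G_def K_def
      proof (rule insert.IH[rule_format])
        show "(\<lambda>x. f (x(i := s))) \<in> borel_measurable (Pi\<^sub>M I (\<lambda>_. lborel))"
          using measurable_comp[OF upd] by measurable
        show "(\<lambda>x. g (x(i := t))) \<in> borel_measurable (Pi\<^sub>M I (\<lambda>_. lborel))"
          using measurable_comp[OF upd] by measurable
        show "(\<lambda>x. k (x(i := (s + t) / 2))) \<in> borel_measurable (Pi\<^sub>M I (\<lambda>_. lborel))"
          using measurable_comp[OF upd] by measurable
        fix x y assume x: "x \<in> space (Pi\<^sub>M I (\<lambda>_. lborel :: real measure))" and y: "y \<in> space (Pi\<^sub>M I (\<lambda>_. lborel :: real measure))"
        have x': "x(i := s) \<in> space (Pi\<^sub>M (insert i I) (\<lambda>_. lborel :: real measure))"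
          unfolding space_PiM by (rule PiE_fun_upd) (use x in \<open>auto simp: space_PiM\<close>)
        have y': "y(i := t) \<in> space (Pi\<^sub>M (insert i I) (\<lambda>_. lborel :: real measure))"
          unfolding space_PiM by (rule PiE_fun_upd) (use y in \<open>auto simp: space_PiM\<close>)
        have eq: "restrict (\<lambda>j. ((x(i := s)) j + (y(i := t)) j) / 2) (insert i I)
            = (restrict (\<lambda>j. (x j + y j) / 2) I)(i := (s + t) / 2)"
          using insert(2) by (auto simp: fun_eq_iff restrict_def)
        show "f (x(i := s)) * g (y(i := t)) \<le> k ((restrict (\<lambda>j. (x j + y j) / 2) I)(i := (s + t) / 2)) ^ 2"
          using h x' y' eq by metis
      qed
    qed
    then show "(\<integral>\<^sup>+x. f x \<partial>Pi\<^sub>M (insert i I) (\<lambda>_. lborel)) * (\<integral>\<^sup>+x. g x \<partial>Pi\<^sub>M (insert i I) (\<lambda>_. lborel)) \<le> (\<integral>\<^sup>+x. k x \<partial>Pi\<^sub>M (insert i I) (\<lambda>_. lborel)) ^ 2"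
      by (simp add: eF eG eK)
  qed
qed

lemma pl_eucl:
  fixes f g k :: "'a::euclidean_space \<Rightarrow> ennreal"
  assumes [measurable]: "f \<in> borel_measurable borel" "g \<in> borel_measurable borel" "k \<in> borel_measurable borel"
    and hyp: "\<And>x y. f x * g y \<le> k ((x + y) /\<^sub>R 2) ^ 2"
  shows "(\<integral>\<^sup>+x. f x \<partial>lborel) * (\<integral>\<^sup>+x. g x \<partial>lborel) \<le> (\<integral>\<^sup>+x. k x \<partial>lborel) ^ 2"
proof -
  define S :: "('a \<Rightarrow> real) \<Rightarrow> 'a" where "S h = (\<Sum>b\<in>Basis. h b *\<^sub>R b)" for h
  have Sm[measurable]: "S \<in> borel_measurable (Pi\<^sub>M Basis (\<lambda>_. lborel))" unfolding S_def by measurable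
  have int: "(\<integral>\<^sup>+x. h x \<partial>lborel) = (\<integral>\<^sup>+x. h (S x) \<partial>Pi\<^sub>M Basis (\<lambda>_. lborel))"
    if [measurable]: "h \<in> borel_measurable borel" for h :: "'a \<Rightarrow> ennreal"
    by (subst lborel_eq) (simp add: nn_integral_distr S_def)
  have "(\<integral>\<^sup>+x. f (S x) \<partial>Pi\<^sub>M Basis (\<lambda>_. lborel)) * (\<integral>\<^sup>+x. g (S x) \<partial>Pi\<^sub>M Basis (\<lambda>_. lborel))
      \<le> (\<integral>\<^sup>+x. k (S x) \<partial>Pi\<^sub>M Basis (\<lambda>_. lborel)) ^ 2"
  proof (rule plI[OF finite_Basis, rule_format])
    show "(\<lambda>x. f (S x)) \<in> borel_measurable (Pi\<^sub>M Basis (\<lambda>_. lborel))"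
      "(\<lambda>x. g (S x)) \<in> borel_measurable (Pi\<^sub>M Basis (\<lambda>_. lborel))"
      "(\<lambda>x. k (S x)) \<in> borel_measurable (Pi\<^sub>M Basis (\<lambda>_. lborel))" by measurable
    fix x y :: "'a \<Rightarrow> real"
    have "S (restrict (\<lambda>j. (x j + y j) / 2) Basis) = (S x + S y) /\<^sub>R 2"
    proof -
      have "S (restrict (\<lambda>j. (x j + y j) / 2) Basis) = (\<Sum>b\<in>Basis. ((x b + y b) / 2) *\<^sub>R b)"
        unfolding S_def by (rule sum.cong) auto
      also have "\<dots> = (\<Sum>b\<in>Basis. (1/2) *\<^sub>R (x b *\<^sub>R b) + (1/2) *\<^sub>R (y b *\<^sub>R b))"
        by (rule sum.cong) (auto simp: scaleR_add_left[symmetric] add_divide_distrib)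
      also have "\<dots> = (S x + S y) /\<^sub>R 2"
        by (simp add: S_def sum.distrib scaleR_sum_right scaleR_add_right)
      finally show ?thesis .
    qed
    then show "f (S x) * g (S y) \<le> k (S (restrict (\<lambda>j. (x j + y j) / 2) Basis)) ^ 2"
      using hyp by simp
  qed
  then show ?thesis by (simp add: int)
qed

lemma gauss1d: "(\<integral>\<^sup>+x. ennreal (exp (- (x^2) / 2)) \<partial>lborel) = ennreal (sqrt (2 * pi))"
proof -
  have one: "(\<integral>\<^sup>+x. ennreal (std_normal_density x) \<partial>lborel) = 1"
    by (subst nn_integral_eq_integral) auto
  have e: "ennreal (exp (- (x^2) / 2)) = ennreal (sqrt (2 * pi)) * ennreal (std_normal_density x)" for x
  proof -
    have "exp (- (x^2) / 2) = sqrt (2 * pi) * std_normal_density x"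
      by (simp add: std_normal_density_def)
    then show ?thesis by (simp add: ennreal_mult)
  qed
  have "(\<integral>\<^sup>+x. ennreal (exp (- (x^2) / 2)) \<partial>lborel) = (\<integral>\<^sup>+x. ennreal (sqrt (2 * pi)) * ennreal (std_normal_density x) \<partial>lborel)"
    by (rule nn_integral_cong) (rule e)
  also have "\<dots> = ennreal (sqrt (2 * pi))"
    by (simp add: nn_integral_cmult one)
  finally show ?thesis .
qed

lemma gauss_int:
  "(\<integral>\<^sup>+x. ennreal (exp (- (norm x)\<^sup>2 / 2)) \<partial>(lborel :: 'a::euclidean_space measure))
     = ennreal ((2 * pi) powr (real DIM('a) / 2))"
proof -
  have e: "ennreal (exp (- (norm x)\<^sup>2 / 2)) = (\<Prod>b\<in>Basis. ennreal (exp (- ((x \<bullet> b)^2) / 2)))" for x :: 'a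
  proof -
    have "(norm x)\<^sup>2 = x \<bullet> x" by (rule power2_norm_eq_inner)
    also have "\<dots> = (\<Sum>b\<in>Basis. x \<bullet> b * (x \<bullet> b))" by (rule euclidean_inner)
    also have "\<dots> = (\<Sum>b\<in>Basis. (x \<bullet> b)^2)" by (simp add: power2_eq_square)
    finally have "(norm x)\<^sup>2 = (\<Sum>b\<in>Basis. (x \<bullet> b)^2)" .
    then have "- (norm x)\<^sup>2 / 2 = (\<Sum>b\<in>Basis. - ((x \<bullet> b)^2) / 2)"
      by (simp add: sum_divide_distrib sum_negf)
    then have "exp (- (norm x)\<^sup>2 / 2) = (\<Prod>b\<in>Basis. exp (- ((x \<bullet> b)^2) / 2))"
      by (simp add: exp_sum)
    then show ?thesis by (simp add: prod_ennreal)
  qed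
  have "(\<integral>\<^sup>+x. ennreal (exp (- (norm x)\<^sup>2 / 2)) \<partial>(lborel :: 'a measure))
      = (\<integral>\<^sup>+x. (\<Prod>b\<in>Basis. ennreal (exp (- ((x \<bullet> b)^2) / 2))) \<partial>(lborel :: 'a measure))"
    by (rule nn_integral_cong) (rule e)
  also have "\<dots> = (\<Prod>b\<in>(Basis :: 'a set). (\<integral>\<^sup>+x. ennreal (exp (- (x^2) / 2)) \<partial>lborel))"
    by (rule nn_integral_lborel_prod[where f = "\<lambda>b x. ennreal (exp (- (x^2) / 2))"]) auto
  also have "\<dots> = ennreal (sqrt (2 * pi)) ^ DIM('a)"
    by (simp only: gauss1d prod_constant)
  also have "\<dots> = ennreal (sqrt (2 * pi) ^ DIM('a))"
    by (simp add: ennreal_power)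
  also have "sqrt (2 * pi) ^ DIM('a) = (2 * pi) powr (real DIM('a) / 2)"
    by (simp add: powr_half_sqrt[symmetric] powr_power)
  finally show ?thesis .
qed

lemma prob_space_std_gaussian: "prob_space (std_gaussian :: 'a::euclidean_space measure)"
proof
  have "emeasure (std_gaussian :: 'a measure) (space std_gaussian)
      = (\<integral>\<^sup>+x. ennreal ((2 * pi) powr (- real DIM('a) / 2) * exp (- (norm x)\<^sup>2 / 2)) \<partial>(lborel :: 'a measure))"
    unfolding std_gaussian_def by (simp add: emeasure_density)
  also have "\<dots> = ennreal ((2 * pi) powr (- real DIM('a) / 2)) * (\<integral>\<^sup>+x. ennreal (exp (- (norm x)\<^sup>2 / 2)) \<partial>(lborel :: 'a measure))"
    by (simp add: ennreal_mult nn_integral_cmult)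
  also have "\<dots> = ennreal ((2 * pi) powr (- real DIM('a) / 2) * (2 * pi) powr (real DIM('a) / 2))"
    by (simp only: gauss_int ennreal_mult[symmetric] powr_ge_zero)
  also have "\<dots> = 1"
    by (simp add: powr_add[symmetric])
  finally show "emeasure (std_gaussian :: 'a measure) (space std_gaussian) = 1" .
qed

lemma nn_integral_lborel_translate:
  fixes h :: "'a::euclidean_space \<Rightarrow> ennreal"
  assumes [measurable]: "h \<in> borel_measurable borel"
  shows "(\<integral>\<^sup>+x. h x \<partial>lborel) = (\<integral>\<^sup>+x. h (c + x) \<partial>lborel)"
proof -
  have "(\<integral>\<^sup>+x. h x \<partial>lborel) = (\<integral>\<^sup>+x. h x \<partial>distr lborel borel ((+) c))"
    by (simp add: lborel_distr_plus)
  also have "\<dots> = (\<integral>\<^sup>+x. h (c + x) \<partial>lborel)"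
    by (rule nn_integral_distr) auto
  finally show ?thesis .
qed

lemma gauss_mgf:
  fixes c :: "'a::euclidean_space"
  shows "(\<integral>\<^sup>+x. ennreal (exp (c \<bullet> x)) \<partial>(std_gaussian :: 'a measure)) = ennreal (exp ((norm c)\<^sup>2 / 2))"
proof -
  define K where "K = (2 * pi) powr (- real DIM('a) / 2)"
  have K0: "0 \<le> K" by (simp add: K_def)
  have "(\<integral>\<^sup>+x. ennreal (exp (c \<bullet> x)) \<partial>(std_gaussian :: 'a measure))
      = (\<integral>\<^sup>+x. ennreal (K * exp (- (norm x)\<^sup>2 / 2)) * ennreal (exp (c \<bullet> x)) \<partial>(lborel :: 'a measure))"
    unfolding std_gaussian_def K_def by (rule nn_integral_density) auto
  also have "\<dots> = (\<integral>\<^sup>+x. ennreal (K * exp ((norm c)\<^sup>2 / 2)) * ennreal (exp (- (norm (x - c))\<^sup>2 / 2)) \<partial>(lborel :: 'a measure))"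
  proof (rule nn_integral_cong)
    fix x :: 'a
    have "(norm (x - c))\<^sup>2 = (norm x)\<^sup>2 - 2 * (c \<bullet> x) + (norm c)\<^sup>2"
      by (simp add: power2_norm_eq_inner inner_diff_left inner_diff_right inner_commute)
    then have "- (norm x)\<^sup>2 / 2 + c \<bullet> x = (norm c)\<^sup>2 / 2 + - (norm (x - c))\<^sup>2 / 2"
      by (simp add: field_simps)
    then have "K * exp (- (norm x)\<^sup>2 / 2) * exp (c \<bullet> x) = K * exp ((norm c)\<^sup>2 / 2) * exp (- (norm (x - c))\<^sup>2 / 2)"
      by (simp add: mult.assoc exp_add[symmetric])
    then show "ennreal (K * exp (- (norm x)\<^sup>2 / 2)) * ennreal (exp (c \<bullet> x)) = ennreal (K * exp ((norm c)\<^sup>2 / 2)) * ennreal (exp (- (norm (x - c))\<^sup>2 / 2))"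
      using K0 by (simp add: ennreal_mult[symmetric])
  qed
  also have "\<dots> = ennreal (K * exp ((norm c)\<^sup>2 / 2)) * (\<integral>\<^sup>+x. ennreal (exp (- (norm (x - c))\<^sup>2 / 2)) \<partial>(lborel :: 'a measure))"
    by (rule nn_integral_cmult) measurable
  also have "(\<integral>\<^sup>+x. ennreal (exp (- (norm (x - c))\<^sup>2 / 2)) \<partial>(lborel :: 'a measure)) = (\<integral>\<^sup>+x. ennreal (exp (- (norm x)\<^sup>2 / 2)) \<partial>(lborel :: 'a measure))"
    by (subst nn_integral_lborel_translate[where c = c]) auto
  also have "\<dots> = ennreal ((2 * pi) powr (real DIM('a) / 2))" by (rule gauss_int)
  also have "ennreal (K * exp ((norm c)\<^sup>2 / 2)) * ennreal ((2 * pi) powr (real DIM('a) / 2))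
     = ennreal (K * (2 * pi) powr (real DIM('a) / 2) * exp ((norm c)\<^sup>2 / 2))"
    using K0 by (simp add: ennreal_mult[symmetric] mult_ac)
  also have "K * (2 * pi) powr (real DIM('a) / 2) = 1"
    by (simp add: K_def powr_add[symmetric])
  finally show ?thesis by simp
qed

lemma std_gaussian_integral:
  fixes u :: "'a::euclidean_space \<Rightarrow> real"
  assumes [measurable]: "u \<in> borel_measurable borel"
  shows "(\<integral>\<^sup>+x. ennreal (exp (u x)) \<partial>(std_gaussian :: 'a measure))
    = ennreal ((2 * pi) powr (- real DIM('a) / 2)) * (\<integral>\<^sup>+x. ennreal (exp (u x - (norm x)\<^sup>2 / 2)) \<partial>(lborel :: 'a measure))"
proof -
  define K where "K = (2 * pi) powr (- real DIM('a) / 2)"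
  have K0: "0 \<le> K" by (simp add: K_def)
  have "(\<integral>\<^sup>+x. ennreal (exp (u x)) \<partial>(std_gaussian :: 'a measure))
      = (\<integral>\<^sup>+x. ennreal (K * exp (- (norm x)\<^sup>2 / 2)) * ennreal (exp (u x)) \<partial>(lborel :: 'a measure))"
    unfolding std_gaussian_def K_def by (rule nn_integral_density) auto
  also have "\<dots> = (\<integral>\<^sup>+x. ennreal K * ennreal (exp (u x - (norm x)\<^sup>2 / 2)) \<partial>(lborel :: 'a measure))"
  proof (rule nn_integral_cong)
    fix x :: 'a
    have "K * exp (- (norm x)\<^sup>2 / 2) * exp (u x) = K * exp (u x - (norm x)\<^sup>2 / 2)"
      by (simp add: mult.assoc exp_add[symmetric])
    then show "ennreal (K * exp (- (norm x)\<^sup>2 / 2)) * ennreal (exp (u x)) = ennreal K * ennreal (exp (u x - (norm x)\<^sup>2 / 2))"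
      using K0 by (simp add: ennreal_mult[symmetric])
  qed
  also have "\<dots> = ennreal K * (\<integral>\<^sup>+x. ennreal (exp (u x - (norm x)\<^sup>2 / 2)) \<partial>(lborel :: 'a measure))"
    by (rule nn_integral_cmult) measurable
  finally show ?thesis by (simp add: K_def)
qed

lemma maurey:
  fixes F H :: "'a::euclidean_space \<Rightarrow> real"
  assumes [measurable]: "F \<in> borel_measurable borel" "H \<in> borel_measurable borel"
    and hH: "\<And>x y. H x \<le> (norm (x - y))\<^sup>2 / 4 + F y"
  shows "(\<integral>\<^sup>+x. ennreal (exp (H x)) \<partial>(std_gaussian :: 'a measure)) * (\<integral>\<^sup>+x. ennreal (exp (- F x)) \<partial>(std_gaussian :: 'a measure)) \<le> 1"
proof -
  define K where "K = (2 * pi) powr (- real DIM('a) / 2)"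
  define Z where "Z = (2 * pi) powr (real DIM('a) / 2)"
  have K0: "0 \<le> K" and Z0: "0 \<le> Z" by (simp_all add: K_def Z_def)
  have KZ: "K * Z = 1" by (simp add: K_def Z_def powr_add[symmetric])
  let ?phi = "\<lambda>x::'a. ennreal (exp (H x - (norm x)\<^sup>2 / 2))"
  let ?psi = "\<lambda>x::'a. ennreal (exp (- F x - (norm x)\<^sup>2 / 2))"
  let ?chi = "\<lambda>x::'a. ennreal (exp (- (norm x)\<^sup>2 / 2))"
  have pl: "(\<integral>\<^sup>+x. ?phi x \<partial>lborel) * (\<integral>\<^sup>+x. ?psi x \<partial>lborel) \<le> (\<integral>\<^sup>+x. ?chi x \<partial>lborel) ^ 2"
  proof (rule pl_eucl)
    show "?phi \<in> borel_measurable borel" "?psi \<in> borel_measurable borel" "?chi \<in> borel_measurable borel"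
      by measurable
    fix x y :: 'a
    have n1: "(norm ((x + y) /\<^sub>R 2))\<^sup>2 = (norm (x + y))\<^sup>2 / 4"
      by (simp add: power2_eq_square)
    have par: "(norm (x - y))\<^sup>2 / 4 - (norm x)\<^sup>2 / 2 - (norm y)\<^sup>2 / 2 = - (norm (x + y))\<^sup>2 / 4"
      by (simp add: power2_norm_eq_inner inner_diff_left inner_diff_right inner_add_left inner_add_right inner_commute field_simps)
    have "H x - (norm x)\<^sup>2 / 2 + (- F y - (norm y)\<^sup>2 / 2) \<le> - (norm (x + y))\<^sup>2 / 4"
      using hH[of x y] par by linarith
    then have "exp (H x - (norm x)\<^sup>2 / 2) * exp (- F y - (norm y)\<^sup>2 / 2) \<le> exp (- (norm ((x + y) /\<^sub>R 2))\<^sup>2 / 2) ^ 2"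
      by (simp add: exp_add[symmetric] n1 power2_eq_square)
    then show "?phi x * ?psi y \<le> ?chi ((x + y) /\<^sub>R 2) ^ 2"
      by (simp add: ennreal_mult[symmetric] ennreal_power)
  qed
  have "(\<integral>\<^sup>+x. ennreal (exp (H x)) \<partial>(std_gaussian :: 'a measure)) * (\<integral>\<^sup>+x. ennreal (exp (- F x)) \<partial>(std_gaussian :: 'a measure))
      = (ennreal K * (\<integral>\<^sup>+x. ?phi x \<partial>lborel)) * (ennreal K * (\<integral>\<^sup>+x. ?psi x \<partial>lborel))"
    by (simp add: std_gaussian_integral[of H] std_gaussian_integral[of "\<lambda>x. - F x"] K_def)
  also have "\<dots> = ennreal K ^ 2 * ((\<integral>\<^sup>+x. ?phi x \<partial>lborel) * (\<integral>\<^sup>+x. ?psi x \<partial>lborel))"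
    by (simp add: power2_eq_square mult_ac)
  also have "\<dots> \<le> ennreal K ^ 2 * (\<integral>\<^sup>+x. ?chi x \<partial>lborel) ^ 2"
    by (rule mult_left_mono[OF pl]) simp
  also have "(\<integral>\<^sup>+x. ?chi x \<partial>lborel) = ennreal Z" unfolding Z_def by (rule gauss_int)
  also have "ennreal K ^ 2 * ennreal Z ^ 2 = 1"
    using K0 Z0 KZ by (simp add: ennreal_power ennreal_mult[symmetric] power_mult_distrib[symmetric])
  finally show ?thesis .
qed

lemma linear_borel_measurable:
  fixes A :: "'a::euclidean_space \<Rightarrow> 'b::euclidean_space"
  assumes "linear A" shows "A \<in> borel_measurable borel"
  using assms by (intro borel_measurable_continuous_onI linear_continuous_on) (simp add: linear_conv_bounded_linear)

lemma sets_std_gaussian[simp, measurable_cong]: "sets (std_gaussian :: 'a::euclidean_space measure) = sets borel"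
  by (simp add: std_gaussian_def)

lemma mgf_aff:
  fixes A :: "'a::euclidean_space \<Rightarrow> 'a" and b y :: 'a
  assumes lin: "linear A"
  shows "(\<integral>\<^sup>+x. ennreal (exp (y \<bullet> x)) \<partial>distr (std_gaussian :: 'a measure) borel (\<lambda>u. A u + b))
       = ennreal (exp (y \<bullet> b + (norm (adjoint A y))\<^sup>2 / 2))"
proof -
  have [measurable]: "A \<in> borel_measurable borel" by (rule linear_borel_measurable[OF lin])
  have "(\<integral>\<^sup>+x. ennreal (exp (y \<bullet> x)) \<partial>distr (std_gaussian :: 'a measure) borel (\<lambda>u. A u + b))
      = (\<integral>\<^sup>+u. ennreal (exp (y \<bullet> (A u + b))) \<partial>(std_gaussian :: 'a measure))"
    by (rule nn_integral_distr) measurable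
  also have "\<dots> = (\<integral>\<^sup>+u. ennreal (exp (y \<bullet> b)) * ennreal (exp (adjoint A y \<bullet> u)) \<partial>(std_gaussian :: 'a measure))"
  proof (rule nn_integral_cong)
    fix u :: 'a
    have "y \<bullet> (A u + b) = y \<bullet> b + adjoint A y \<bullet> u"
      using adjoint_works[OF lin, of u y] by (simp add: inner_add_right inner_commute)
    then show "ennreal (exp (y \<bullet> (A u + b))) = ennreal (exp (y \<bullet> b)) * ennreal (exp (adjoint A y \<bullet> u))"
      by (simp add: exp_add ennreal_mult)
  qed
  also have "\<dots> = ennreal (exp (y \<bullet> b)) * (\<integral>\<^sup>+u. ennreal (exp (adjoint A y \<bullet> u)) \<partial>(std_gaussian :: 'a measure))"
    by (rule nn_integral_cmult) measurable
  also have "\<dots> = ennreal (exp (y \<bullet> b)) * ennreal (exp ((norm (adjoint A y))\<^sup>2 / 2))"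
    by (simp only: gauss_mgf)
  also have "\<dots> = ennreal (exp (y \<bullet> b + (norm (adjoint A y))\<^sup>2 / 2))"
    by (simp add: exp_add ennreal_mult)
  finally show ?thesis .
qed

lemma mgf_sym:
  fixes A :: "'a::euclidean_space \<Rightarrow> 'a" and b y :: 'a
  assumes lin: "linear A"
  defines "\<mu> \<equiv> distr (std_gaussian :: 'a measure) borel (\<lambda>u. A u + b)"
  shows "mgf (symmetrization \<mu>) y = ennreal (exp ((norm (adjoint A y))\<^sup>2))"
proof -
  have [measurable]: "A \<in> borel_measurable borel" by (rule linear_borel_measurable[OF lin])
  interpret g: prob_space "std_gaussian :: 'a measure" by (rule prob_space_std_gaussian)
  have pmu: "prob_space \<mu>" unfolding \<mu>_def by (rule g.prob_space_distr) measurable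
  have smu[measurable_cong]: "sets \<mu> = sets borel" by (simp add: \<mu>_def)
  define \<rho> where "\<rho> = reflect \<mu>"
  have srho[measurable_cong]: "sets \<rho> = sets borel" by (simp add: \<rho>_def reflect_def)
  have prho: "prob_space \<rho>" unfolding \<rho>_def reflect_def
    by (rule prob_space.prob_space_distr[OF pmu]) measurable
  interpret r: sigma_finite_measure \<rho> by (rule prob_space_imp_sigma_finite[OF prho])
  have "mgf (symmetrization \<mu>) y = (\<integral>\<^sup>+v. ennreal (exp (y \<bullet> v)) \<partial>distr (\<mu> \<Otimes>\<^sub>M \<rho>) borel (\<lambda>(x, z). x + z))"
    by (simp add: mgf_def symmetrization_def \<rho>_def)
  also have "\<dots> = (\<integral>\<^sup>+p. ennreal (exp (y \<bullet> (case p of (x, z) \<Rightarrow> x + z))) \<partial>(\<mu> \<Otimes>\<^sub>M \<rho>))"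
    by (rule nn_integral_distr) measurable
  also have "\<dots> = (\<integral>\<^sup>+x. \<integral>\<^sup>+z. ennreal (exp (y \<bullet> (x + z))) \<partial>\<rho> \<partial>\<mu>)"
    by (rule r.nn_integral_fst[symmetric, where f = "\<lambda>p. ennreal (exp (y \<bullet> (case p of (x, z) \<Rightarrow> x + z)))", simplified]) measurable
  also have "\<dots> = (\<integral>\<^sup>+x. ennreal (exp (y \<bullet> x)) * (\<integral>\<^sup>+z. ennreal (exp (y \<bullet> z)) \<partial>\<rho>) \<partial>\<mu>)"
  proof (rule nn_integral_cong)
    fix x
    have "(\<integral>\<^sup>+z. ennreal (exp (y \<bullet> (x + z))) \<partial>\<rho>) = (\<integral>\<^sup>+z. ennreal (exp (y \<bullet> x)) * ennreal (exp (y \<bullet> z)) \<partial>\<rho>)"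
      by (simp add: inner_add_right exp_add ennreal_mult)
    also have "\<dots> = ennreal (exp (y \<bullet> x)) * (\<integral>\<^sup>+z. ennreal (exp (y \<bullet> z)) \<partial>\<rho>)"
      by (rule nn_integral_cmult) measurable
    finally show "(\<integral>\<^sup>+z. ennreal (exp (y \<bullet> (x + z))) \<partial>\<rho>) = ennreal (exp (y \<bullet> x)) * (\<integral>\<^sup>+z. ennreal (exp (y \<bullet> z)) \<partial>\<rho>)" .
  qed
  also have "\<dots> = (\<integral>\<^sup>+x. ennreal (exp (y \<bullet> x)) \<partial>\<mu>) * (\<integral>\<^sup>+z. ennreal (exp (y \<bullet> z)) \<partial>\<rho>)"
    by (rule nn_integral_multc) measurable
  also have "(\<integral>\<^sup>+z. ennreal (exp (y \<bullet> z)) \<partial>\<rho>) = (\<integral>\<^sup>+x. ennreal (exp ((- y) \<bullet> x)) \<partial>\<mu>)"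
  proof -
    have "(\<integral>\<^sup>+z. ennreal (exp (y \<bullet> z)) \<partial>\<rho>) = (\<integral>\<^sup>+x. ennreal (exp (y \<bullet> (- x))) \<partial>\<mu>)"
      unfolding \<rho>_def reflect_def by (rule nn_integral_distr) measurable
    then show ?thesis by simp
  qed
  also have "(\<integral>\<^sup>+x. ennreal (exp (y \<bullet> x)) \<partial>\<mu>) = ennreal (exp (y \<bullet> b + (norm (adjoint A y))\<^sup>2 / 2))"
    unfolding \<mu>_def by (rule mgf_aff[OF lin])
  also have "(\<integral>\<^sup>+x. ennreal (exp ((- y) \<bullet> x)) \<partial>\<mu>) = ennreal (exp ((- y) \<bullet> b + (norm (adjoint A (- y)))\<^sup>2 / 2))"
    unfolding \<mu>_def by (rule mgf_aff[OF lin])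
  also have "adjoint A (- y) = - adjoint A y"
    by (rule real_vector.linear_neg[OF adjoint_linear[OF lin]])
  also have "ennreal (exp (y \<bullet> b + (norm (adjoint A y))\<^sup>2 / 2)) * ennreal (exp ((- y) \<bullet> b + (norm (- adjoint A y))\<^sup>2 / 2))
      = ennreal (exp ((norm (adjoint A y))\<^sup>2))"
    by (simp add: ennreal_mult[symmetric] exp_add[symmetric])
  finally show ?thesis .
qed

lemma cramer_bound:
  fixes A :: "'a::euclidean_space \<Rightarrow> 'a" and b w :: 'a
  assumes lin: "linear A"
  shows "cramer (symmetrization (distr (std_gaussian :: 'a measure) borel (\<lambda>u. A u + b))) (A w) \<le> ereal ((norm w)\<^sup>2 / 4)"
  unfolding cramer_def
proof (rule SUP_least)
  fix y :: 'a
  define z where "z = adjoint A y"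
  have "log_mgf (symmetrization (distr (std_gaussian :: 'a measure) borel (\<lambda>u. A u + b))) y = ereal ((norm z)\<^sup>2)"
    unfolding log_mgf_def mgf_sym[OF lin] z_def by simp
  moreover have "A w \<bullet> y = w \<bullet> z" unfolding z_def by (rule adjoint_works[OF lin, symmetric])
  moreover have "w \<bullet> z - (norm z)\<^sup>2 \<le> (norm w)\<^sup>2 / 4"
  proof -
    have "0 \<le> (norm (w - 2 *\<^sub>R z))\<^sup>2" by simp
    also have "(norm (w - 2 *\<^sub>R z))\<^sup>2 = (norm w)\<^sup>2 - 4 * (w \<bullet> z) + 4 * (norm z)\<^sup>2"
      by (simp add: power2_norm_eq_inner inner_diff_left inner_diff_right inner_commute algebra_simps)
    finally show ?thesis by simp
  qed
  ultimately show "ereal (A w \<bullet> y) - log_mgf (symmetrization (distr (std_gaussian :: 'a measure) borel (\<lambda>u. A u + b))) y \<le> ereal ((norm w)\<^sup>2 / 4)"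
    by simp
qed

lemma le_ereal_Inf:
  fixes a :: ereal and g :: "'b \<Rightarrow> real"
  assumes "\<And>v. a \<le> ereal (g v)" and "bdd_below (range g)"
  shows "a \<le> ereal (Inf (range g))"
proof (cases a)
  case (real r)
  then have "r \<le> Inf (range g)" using assms by (intro cInf_greatest) auto
  then show ?thesis using real by simp
next
  case PInf
  then show ?thesis using assms(1)[of undefined] by simp
next
  case MInf
  then show ?thesis by simp
qed

lemma eexp_le: "t \<le> ereal r \<Longrightarrow> eexp t \<le> ennreal (exp r)"
  unfolding eexp_def by (cases t) auto

theorem theorem1:
  fixes \<mu> :: "'a::euclidean_space measure"
  assumes "gaussian \<mu>"
  shows "IC 1 \<mu>"
proof -
  obtain A b where lin: "linear A" and mu: "\<mu> = distr (std_gaussian :: 'a measure) borel (\<lambda>x. A x + b)"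
    using assms unfolding gaussian_def by blast
  have Am[measurable]: "A \<in> borel_measurable borel" by (rule linear_borel_measurable[OF lin])
  interpret g: prob_space "std_gaussian :: 'a measure" by (rule prob_space_std_gaussian)
  have pmu: "prob_space \<mu>" unfolding mu by (rule g.prob_space_distr) measurable
  have smu: "sets \<mu> = sets borel" by (simp add: mu)
  define W where "W = (\<lambda>x. cramer (symmetrization \<mu>) (x /\<^sub>R 1))"
  have Wb: "W (A w) \<le> ereal ((norm w)\<^sup>2 / 4)" for w
    unfolding W_def mu using cramer_bound[OF lin] by simp
  have "property_tau \<mu> W"
    unfolding property_tau_def
  proof (intro allI impI)
    fix f :: "'a \<Rightarrow> real"
    assume fm[measurable]: "f \<in> borel_measurable borel" and fb: "bounded (range f)"
    obtain Bd where Bd: "\<And>y. \<bar>f y\<bar> \<le> Bd" using fb unfolding bounded_iff by auto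
    define T where "T u = A u + b" for u
    define F where "F u = f (T u)" for u
    have Tm[measurable]: "T \<in> borel_measurable borel" unfolding T_def by measurable
    have Fm[measurable]: "F \<in> borel_measurable borel" unfolding F_def by measurable
    define H where "H u = Inf (range (\<lambda>v. (norm (u - v))\<^sup>2 / 4 + F v))" for u
    have bdd: "bdd_below (range (\<lambda>v. (norm (u - v))\<^sup>2 / 4 + F v))" for u
    proof (rule bdd_belowI2)
      fix v
      have "- Bd \<le> F v" using Bd[of "T v"] by (simp add: F_def)
      then show "- Bd \<le> (norm (u - v))\<^sup>2 / 4 + F v" by (smt (verit) zero_le_power2 divide_nonneg_pos)
    qed
    have hH: "H x \<le> (norm (x - y))\<^sup>2 / 4 + F y" for x y
      unfolding H_def by (rule cInf_lower) (auto simp: bdd)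
    have Hm[measurable]: "H \<in> borel_measurable borel"
    proof (subst borel_measurable_iff_less, intro allI)
      fix a :: real
      have "{w \<in> space borel. H w < a} = (\<Union>v. {w. (norm (w - v))\<^sup>2 / 4 + F v < a})"
        unfolding H_def using cInf_less_iff[OF _ bdd] by auto
      also have "\<dots> \<in> sets borel"
        by (intro borel_open open_UN ballI open_Collect_less) (auto intro!: continuous_intros)
      finally show "{w \<in> space borel. H w < a} \<in> sets borel" .
    qed
    have Hinv: "H (u + k) = H u" if Ak: "A k = 0" for u k
    proof -
      have Fk: "F (v + k) = F v" for v
        using Ak by (simp add: F_def T_def real_vector.linear_add[OF lin])
      have "(\<lambda>v. (norm (u + k - v))\<^sup>2 / 4 + F v) = (\<lambda>v. (norm (u - v))\<^sup>2 / 4 + F v) \<circ> (\<lambda>v. v - k)"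
      proof
        fix v
        have "F v = F ((v - k) + k)" by simp
        also have "\<dots> = F (v - k)" by (rule Fk)
        finally show "(norm (u + k - v))\<^sup>2 / 4 + F v = ((\<lambda>v. (norm (u - v))\<^sup>2 / 4 + F v) \<circ> (\<lambda>v. v - k)) v"
          by (simp add: algebra_simps)
      qed
      then have "range (\<lambda>v. (norm (u + k - v))\<^sup>2 / 4 + F v) = ((\<lambda>v. (norm (u - v))\<^sup>2 / 4 + F v) \<circ> (\<lambda>v. v - k)) ` UNIV"
        by (rule arg_cong[where f = "\<lambda>h. h ` UNIV"])
      also have "\<dots> = (\<lambda>v. (norm (u - v))\<^sup>2 / 4 + F v) ` range (\<lambda>v::'a. v - k)"
        by (rule image_comp[symmetric])
      also have "range (\<lambda>v::'a. v - k) = UNIV"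
        by (auto intro: image_eqI[where x = "x + k" for x])
      finally have "range (\<lambda>v. (norm (u + k - v))\<^sup>2 / 4 + F v) = range (\<lambda>v. (norm (u - v))\<^sup>2 / 4 + F v)" .
      then show ?thesis by (simp add: H_def)
    qed
    have hb: "inf_conv W (\<lambda>y. ereal (f y)) (T u) \<le> ereal (H u)" for u
      unfolding H_def
    proof (rule le_ereal_Inf[OF _ bdd])
      fix v
      have "inf_conv W (\<lambda>y. ereal (f y)) (T u) \<le> W (T u - T v) + ereal (f (T v))"
        unfolding inf_conv_def by (rule INF_lower) simp
      also have "T u - T v = A (u - v)" by (simp add: T_def real_vector.linear_diff[OF lin])
      also have "W (A (u - v)) + ereal (f (T v)) \<le> ereal ((norm (u - v))\<^sup>2 / 4) + ereal (F v)"
        unfolding F_def by (rule add_right_mono[OF Wb])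
      finally show "inf_conv W (\<lambda>y. ereal (f y)) (T u) \<le> ereal ((norm (u - v))\<^sup>2 / 4 + F v)" by simp
    qed
    obtain B where linB: "linear B" and AB: "\<And>v. v \<in> range A \<Longrightarrow> A (B v) = v"
      using real_vector.linear_exists_right_inverse_on[OF lin subspace_UNIV] by auto
    have Bm[measurable]: "B \<in> borel_measurable borel" by (rule linear_borel_measurable[OF linB])
    define S where "S = {x. x - b \<in> range A}"
    have S: "S \<in> sets borel"
    proof -
      have "closed (range A)"
        by (rule closed_subspace[OF real_vector.linear_subspace_image[OF lin subspace_UNIV]])
      then have "range A \<in> sets borel" by (rule borel_closed)
      moreover have "(\<lambda>x. x - b) \<in> borel_measurable borel" by measurable
      ultimately have "(\<lambda>x. x - b) -` range A \<inter> space borel \<in> sets borel"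
        by (intro measurable_sets) auto
      then show ?thesis by (simp add: S_def vimage_def)
    qed
    define g where "g x = (if x \<in> S then ennreal (exp (H (B (x - b)))) else \<infinity>)" for x
    have gm: "g \<in> borel_measurable borel"
      unfolding g_def by (rule measurable_If_set) (use S in auto)
    have gle: "eexp (inf_conv W (\<lambda>y. ereal (f y)) x) \<le> g x" for x
    proof (cases "x \<in> S")
      case True
      then have "A (B (x - b)) = x - b" using AB by (simp add: S_def)
      then have "T (B (x - b)) = x" by (simp add: T_def)
      then have "eexp (inf_conv W (\<lambda>y. ereal (f y)) x) \<le> ennreal (exp (H (B (x - b))))"
        using eexp_le[OF hb[of "B (x - b)"]] by simp
      then show ?thesis using True by (simp add: g_def)
    next
      case False
      then show ?thesis by (simp add: g_def)
    qed
    have outer: "outer_nn_integral \<mu> (\<lambda>x. eexp (inf_conv W (\<lambda>y. ereal (f y)) x)) \<le> (\<integral>\<^sup>+x. g x \<partial>\<mu>)"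
      unfolding outer_nn_integral_def
    proof (rule INF_lower, safe)
      show "g \<in> borel_measurable \<mu>" using gm by (simp add: measurable_cong_sets[OF smu refl])
      show "eexp (inf_conv W (\<lambda>y. ereal (f y)) x) \<le> g x" for x by (rule gle)
    qed
    have ig: "(\<integral>\<^sup>+x. g x \<partial>\<mu>) = (\<integral>\<^sup>+u. ennreal (exp (H u)) \<partial>(std_gaussian :: 'a measure))"
    proof -
      have "(\<integral>\<^sup>+x. g x \<partial>\<mu>) = (\<integral>\<^sup>+u. g (A u + b) \<partial>(std_gaussian :: 'a measure))"
        unfolding mu by (rule nn_integral_distr) (use gm in auto)
      also have "\<dots> = (\<integral>\<^sup>+u. ennreal (exp (H u)) \<partial>(std_gaussian :: 'a measure))"
      proof (rule nn_integral_cong)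
        fix u
        have inS: "A u + b \<in> S" by (simp add: S_def)
        have "A (B (A u) - u) = 0"
          using AB[of "A u"] by (simp add: real_vector.linear_diff[OF lin])
        then have "H (u + (B (A u) - u)) = H u" by (rule Hinv)
        then have "H (B (A u)) = H u" by simp
        then show "g (A u + b) = ennreal (exp (H u))" using inS by (simp add: g_def)
      qed
      finally show ?thesis .
    qed
    have ie: "(\<integral>\<^sup>+x. ennreal (exp (- f x)) \<partial>\<mu>) = (\<integral>\<^sup>+u. ennreal (exp (- F u)) \<partial>(std_gaussian :: 'a measure))"
      unfolding mu F_def T_def by (rule nn_integral_distr) measurable
    have "outer_nn_integral \<mu> (\<lambda>x. eexp (inf_conv W (\<lambda>y. ereal (f y)) x)) * (\<integral>\<^sup>+x. ennreal (exp (- f x)) \<partial>\<mu>)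
        \<le> (\<integral>\<^sup>+u. ennreal (exp (H u)) \<partial>(std_gaussian :: 'a measure)) * (\<integral>\<^sup>+u. ennreal (exp (- F u)) \<partial>(std_gaussian :: 'a measure))"
      unfolding ie using outer[unfolded ig] by (rule mult_right_mono) simp
    also have "\<dots> \<le> 1" by (rule maurey[OF Fm Hm hH])
    finally show "outer_nn_integral \<mu> (\<lambda>x. eexp (inf_conv W (\<lambda>y. ereal (f y)) x)) * (\<integral>\<^sup>+x. ennreal (exp (- f x)) \<partial>\<mu>) \<le> 1" .
  qed
  then show ?thesis unfolding IC_def W_def using pmu smu by simp
qed


end
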